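(* Let $X$ be a countable discrete metric space and $d\in D(X,X)$ such that the identity operator of $l^2(X)$ belongs to $M_d(X,X)$. Then $d$ and $d^0$ are almost isometric, i.e. there is $K\ge0$ with $|d(x_1,x_2')-d^0(x_1,x_2')|\le K$ for all $x_1,x_2\in X$.
   Context: $D(X,X)$ is the set of metrics on $X\sqcup X'$, where $X'=\{x':x\in X\}$ is a second copy of $X$, restricting to $d_X$ on each copy; an operator $T$ on $l^2(X)$ is viewed as a map from the first to the second copy, with entries $T_{x'_2x_1}=\langle T\delta_{x_1},\delta_{x_2}\rangle$. $T$ has propagation less than $L$ w.r.t. $d$ if its entry vanishes whenever $d(x_1,x_2')\ge L$; $M_d(X,X)$ is the norm closure of bounded finite-propagation operators. $d^0\in D(X,X)$ is the metric with $d^0(x_1,x_2')=d_X(x_1,x_2)+1$; note $M_{d^0}(X,X)=C^*_u(X)$. *)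

theory Defs
  imports "HOL-Analysis.Analysis"
begin

definition is_metric :: "('b \<Rightarrow> 'b \<Rightarrow> real) \<Rightarrow> bool" where
  "is_metric \<rho> \<longleftrightarrow>
     (\<forall>x y. \<rho> x y = 0 \<longleftrightarrow> x = y) \<and>
     (\<forall>x y. \<rho> x y = \<rho> y x) \<and>
     (\<forall>x y z. \<rho> x z \<le> \<rho> x y + \<rho> y z)"

definition discrete_metric :: "('a \<Rightarrow> 'a \<Rightarrow> real) \<Rightarrow> bool" where
  "discrete_metric dX \<longleftrightarrow> (\<forall>x. \<exists>r>0. \<forall>y. y \<noteq> x \<longrightarrow> r \<le> dX x y)"

text \<open>D(X,X): metrics on X \<sqcup> X' (Inl = first copy X, Inr = second copy X')
  restricting to dX on each copy.\<close>
definition DXX :: "('a \<Rightarrow> 'a \<Rightarrow> real) \<Rightarrow> (('a + 'a) \<Rightarrow> ('a + 'a) \<Rightarrow> real) set" where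
  "DXX dX = {d. is_metric d \<and> (\<forall>x y. d (Inl x) (Inl y) = dX x y) \<and>
                              (\<forall>x y. d (Inr x) (Inr y) = dX x y)}"

fun d0 :: "('a \<Rightarrow> 'a \<Rightarrow> real) \<Rightarrow> ('a + 'a) \<Rightarrow> ('a + 'a) \<Rightarrow> real" where
  "d0 dX (Inl x) (Inl y) = dX x y"
| "d0 dX (Inr x) (Inr y) = dX x y"
| "d0 dX (Inl x) (Inr y) = dX x y + 1"
| "d0 dX (Inr x) (Inl y) = dX x y + 1"

definition ell2 :: "('a \<Rightarrow> complex) set" where
  "ell2 = {f. (\<lambda>x. (cmod (f x))\<^sup>2) summable_on UNIV}"

definition l2norm :: "('a \<Rightarrow> complex) \<Rightarrow> real" where
  "l2norm f = sqrt (\<Sum>\<^sub>\<infinity>x. (cmod (f x))\<^sup>2)"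

definition delta :: "'a \<Rightarrow> 'a \<Rightarrow> complex" where
  "delta x = (\<lambda>y. if y = x then 1 else 0)"

text \<open>Bounded (complex-linear) operators on l^2(X); only their behaviour on l^2(X) matters.\<close>
definition bounded_op :: "(('a \<Rightarrow> complex) \<Rightarrow> ('a \<Rightarrow> complex)) \<Rightarrow> bool" where
  "bounded_op T \<longleftrightarrow>
     (\<forall>f\<in>ell2. T f \<in> ell2) \<and>
     (\<forall>f\<in>ell2. \<forall>g\<in>ell2. T (\<lambda>x. f x + g x) = (\<lambda>x. T f x + T g x)) \<and>
     (\<forall>f\<in>ell2. \<forall>c. T (\<lambda>x. c * f x) = (\<lambda>x. c * T f x)) \<and>
     (\<exists>C. \<forall>f\<in>ell2. l2norm (T f) \<le> C * l2norm f)"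

definition opnorm :: "(('a \<Rightarrow> complex) \<Rightarrow> ('a \<Rightarrow> complex)) \<Rightarrow> real" where
  "opnorm T = Sup {l2norm (T f) | f. f \<in> ell2 \<and> l2norm f \<le> 1}"

text \<open>Matrix entry T_{x2' x1} = <T delta_{x1}, delta_{x2}>.\<close>
definition entry :: "(('a \<Rightarrow> complex) \<Rightarrow> ('a \<Rightarrow> complex)) \<Rightarrow> 'a \<Rightarrow> 'a \<Rightarrow> complex" where
  "entry T x2 x1 = T (delta x1) x2"

definition propagation_less ::
  "(('a + 'a) \<Rightarrow> ('a + 'a) \<Rightarrow> real) \<Rightarrow> real \<Rightarrow> (('a \<Rightarrow> complex) \<Rightarrow> ('a \<Rightarrow> complex)) \<Rightarrow> bool" where
  "propagation_less d L T \<longleftrightarrow> (\<forall>x1 x2. d (Inl x1) (Inr x2) \<ge> L \<longrightarrow> entry T x2 x1 = 0)"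

definition finite_propagation ::
  "(('a + 'a) \<Rightarrow> ('a + 'a) \<Rightarrow> real) \<Rightarrow> (('a \<Rightarrow> complex) \<Rightarrow> ('a \<Rightarrow> complex)) \<Rightarrow> bool" where
  "finite_propagation d T \<longleftrightarrow> (\<exists>L. propagation_less d L T)"

definition Md :: "(('a + 'a) \<Rightarrow> ('a + 'a) \<Rightarrow> real) \<Rightarrow> (('a \<Rightarrow> complex) \<Rightarrow> ('a \<Rightarrow> complex)) set" where
  "Md d = {T. bounded_op T \<and>
              (\<forall>\<epsilon>>0. \<exists>S. bounded_op S \<and> finite_propagation d S \<and>
                          opnorm (\<lambda>f x. T f x - S f x) < \<epsilon>)}"

end

theory Submission
  imports Defs
begin

lemma delta_sq: "(\<lambda>y. (cmod (delta x y))\<^sup>2) = (\<lambda>y. if y = x then 1 else 0)"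
  by (auto simp: delta_def)

lemma delta_ell2: "delta x \<in> ell2"
proof -
  have "(\<lambda>y. (if y = x then 1 else 0)::real) summable_on {x}" by simp
  hence "(\<lambda>y. (if y = x then 1 else 0)::real) summable_on UNIV"
    by (subst summable_on_cong_neutral[where T="{x}"]) auto
  thus ?thesis by (simp add: ell2_def delta_sq)
qed

lemma delta_norm: "l2norm (delta x) = 1"
proof -
  have "infsum (\<lambda>y. (if y = x then 1 else 0)::real) UNIV = infsum (\<lambda>y. (if y = x then 1 else 0)::real) {x}"
    by (rule infsum_cong_neutral) auto
  thus ?thesis by (simp add: l2norm_def delta_sq)
qed

lemma l2norm_nonneg: "l2norm f \<ge> 0"
  unfolding l2norm_def by (auto intro!: infsum_nonneg)

lemma l2norm_point: assumes "f \<in> ell2" shows "cmod (f x) \<le> l2norm f"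
proof -
  have "infsum (\<lambda>y. (cmod (f y))\<^sup>2) {x} \<le> infsum (\<lambda>y. (cmod (f y))\<^sup>2) UNIV"
    using assms unfolding ell2_def by (intro infsum_mono_neutral) auto
  hence "(cmod (f x))\<^sup>2 \<le> infsum (\<lambda>y. (cmod (f y))\<^sup>2) UNIV" by simp
  thus ?thesis unfolding l2norm_def using real_le_rsqrt by auto
qed

lemma diff_bound:
  assumes S: "bounded_op S"
  shows "bdd_above {l2norm ((\<lambda>f x. f x - S f x) f) | f. f \<in> ell2 \<and> l2norm f \<le> 1}"
proof -
  from S obtain C where C: "\<And>f. f \<in> ell2 \<Longrightarrow> l2norm (S f) \<le> C * l2norm f"
    and Sin: "\<And>f. f \<in> ell2 \<Longrightarrow> S f \<in> ell2"
    unfolding bounded_op_def by blast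
  show ?thesis
  proof (rule bdd_aboveI[where M="sqrt (2 + 2 * C\<^sup>2)"])
    fix r assume "r \<in> {l2norm ((\<lambda>f x. f x - S f x) f) | f. f \<in> ell2 \<and> l2norm f \<le> 1}"
    then obtain f where f: "f \<in> ell2 \<and> l2norm f \<le> 1" and rf: "r = l2norm ((\<lambda>f x. f x - S f x) f)" by blast
    have sf: "(\<lambda>y. (cmod (f y))\<^sup>2) summable_on UNIV" using f unfolding ell2_def by auto
    have sS: "(\<lambda>y. (cmod (S f y))\<^sup>2) summable_on UNIV" using Sin f unfolding ell2_def by auto
    have pt: "(cmod (f y - S f y))\<^sup>2 \<le> 2 * (cmod (f y))\<^sup>2 + 2 * (cmod (S f y))\<^sup>2" for y
    proof -
      have "cmod (f y - S f y) \<le> cmod (f y) + cmod (S f y)" by (rule norm_triangle_ineq4)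
      hence "(cmod (f y - S f y))\<^sup>2 \<le> (cmod (f y) + cmod (S f y))\<^sup>2"
        by (intro power_mono) auto
      also have "\<dots> \<le> 2 * (cmod (f y))\<^sup>2 + 2 * (cmod (S f y))\<^sup>2"
        by (smt (verit) sum_squares_bound power2_sum)
      finally show ?thesis .
    qed
    have sB: "(\<lambda>y. 2 * (cmod (f y))\<^sup>2 + 2 * (cmod (S f y))\<^sup>2) summable_on UNIV"
      by (intro summable_on_add summable_on_cmult_right sf sS)
    have sD: "(\<lambda>y. (cmod (f y - S f y))\<^sup>2) summable_on UNIV"
      by (rule summable_on_comparison_test[OF sB]) (use pt in auto)
    have "infsum (\<lambda>y. (cmod (f y - S f y))\<^sup>2) UNIV
        \<le> infsum (\<lambda>y. 2 * (cmod (f y))\<^sup>2 + 2 * (cmod (S f y))\<^sup>2) UNIV"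
      by (rule infsum_mono[OF sD sB pt])
    also have "\<dots> = 2 * infsum (\<lambda>y. (cmod (f y))\<^sup>2) UNIV + 2 * infsum (\<lambda>y. (cmod (S f y))\<^sup>2) UNIV"
      by (simp add: infsum_add summable_on_cmult_right sf sS infsum_cmult_right)
    also have "\<dots> = 2 * (l2norm f)\<^sup>2 + 2 * (l2norm (S f))\<^sup>2"
      unfolding l2norm_def by (simp add: infsum_nonneg)
    also have "\<dots> \<le> 2 * 1 + 2 * (\<bar>C\<bar>)\<^sup>2"
    proof -
      have n0: "0 \<le> l2norm f" by (rule l2norm_nonneg)
      have a: "(l2norm f)\<^sup>2 \<le> 1" using f n0 by (simp add: power_le_one)
      have "l2norm (S f) \<le> \<bar>C\<bar>"
      proof -
        have "C * l2norm f \<le> \<bar>C\<bar> * l2norm f" using n0 by (simp add: mult_right_mono)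
        also have "\<dots> \<le> \<bar>C\<bar>" using f n0 by (simp add: mult_left_le)
        finally show ?thesis using C f by force
      qed
      hence "(l2norm (S f))\<^sup>2 \<le> (\<bar>C\<bar>)\<^sup>2" using l2norm_nonneg by (intro power_mono) auto
      thus ?thesis using a by linarith
    qed
    finally have "infsum (\<lambda>y. (cmod (f y - S f y))\<^sup>2) UNIV \<le> 2 + 2 * C\<^sup>2" by simp
    hence "l2norm (\<lambda>y. f y - S f y) \<le> sqrt (2 + 2 * C\<^sup>2)"
      unfolding l2norm_def by simp
    thus "r \<le> sqrt (2 + 2 * C\<^sup>2)" using rf by simp
  qed
qed

lemma diff_ell2: assumes "f \<in> ell2" "g \<in> ell2" shows "(\<lambda>y. f y - g y) \<in> ell2"
proof -
  have sf: "(\<lambda>y. (cmod (f y))\<^sup>2) summable_on UNIV" using assms unfolding ell2_def by auto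
  have sS: "(\<lambda>y. (cmod (g y))\<^sup>2) summable_on UNIV" using assms unfolding ell2_def by auto
  have pt: "(cmod (f y - g y))\<^sup>2 \<le> 2 * (cmod (f y))\<^sup>2 + 2 * (cmod (g y))\<^sup>2" for y
  proof -
    have "cmod (f y - g y) \<le> cmod (f y) + cmod (g y)" by (rule norm_triangle_ineq4)
    hence "(cmod (f y - g y))\<^sup>2 \<le> (cmod (f y) + cmod (g y))\<^sup>2"
      by (intro power_mono) auto
    also have "\<dots> \<le> 2 * (cmod (f y))\<^sup>2 + 2 * (cmod (g y))\<^sup>2"
      by (smt (verit) sum_squares_bound power2_sum)
    finally show ?thesis .
  qed
  have sB: "(\<lambda>y. 2 * (cmod (f y))\<^sup>2 + 2 * (cmod (g y))\<^sup>2) summable_on UNIV"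
    by (intro summable_on_add summable_on_cmult_right sf sS)
  have sD: "(\<lambda>y. (cmod (f y - g y))\<^sup>2) summable_on UNIV"
    by (rule summable_on_comparison_test[OF sB]) (use pt in auto)
  thus ?thesis unfolding ell2_def by simp
qed

theorem lemma4p1:
  fixes dX :: "'a \<Rightarrow> 'a \<Rightarrow> real"
    and d :: "('a + 'a) \<Rightarrow> ('a + 'a) \<Rightarrow> real"
  assumes "countable (UNIV :: 'a set)"
    and "is_metric dX"
    and "discrete_metric dX"
    and "d \<in> DXX dX"
    and "(\<lambda>f. f) \<in> Md d"
  shows "\<exists>K\<ge>0. \<forall>x1 x2. \<bar>d (Inl x1) (Inr x2) - d0 dX (Inl x1) (Inr x2)\<bar> \<le> K"
proof -
  have "\<forall>\<epsilon>>0. \<exists>S. bounded_op S \<and> finite_propagation d S \<and>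
                          opnorm (\<lambda>f x. f x - S f x) < \<epsilon>" using assms(5) by (simp add: Md_def)
  then obtain S where S: "bounded_op S" "finite_propagation d S"
    and nS: "opnorm (\<lambda>f x. f x - S f x) < 1" using zero_less_one by blast
  from S(2) obtain L where L: "propagation_less d L S" unfolding finite_propagation_def by blast
  have Sx: "S (delta x) x \<noteq> 0" for x
  proof
    assume h: "S (delta x) x = 0"
    have "\<forall>f\<in>ell2. S f \<in> ell2" using S(1) unfolding bounded_op_def by (rule conjunct1)
    hence Sin: "S (delta x) \<in> ell2" using delta_ell2 by (rule bspec)
    have ge: "(\<lambda>y. delta x y - S (delta x) y) \<in> ell2" by (rule diff_ell2[OF delta_ell2 Sin])
    have c1: "cmod ((\<lambda>y. delta x y - S (delta x) y) x) \<le> l2norm (\<lambda>y. delta x y - S (delta x) y)"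
      by (rule l2norm_point[OF ge])
    have c2: "cmod ((\<lambda>y. delta x y - S (delta x) y) x) = 1"
      using h by (simp add: delta_def)
    have mem: "l2norm (\<lambda>y. delta x y - S (delta x) y) \<in> {l2norm ((\<lambda>f x. f x - S f x) f) | f. f \<in> ell2 \<and> l2norm f \<le> 1}"
      by (rule CollectI, rule exI[of _ "delta x"]) (simp add: delta_ell2 delta_norm)
    have "1 \<le> l2norm (\<lambda>y. delta x y - S (delta x) y)" using c1 c2 by simp
    also have "\<dots> \<le> opnorm (\<lambda>f x. f x - S f x)"
      unfolding opnorm_def by (rule cSup_upper[OF mem diff_bound[OF S(1)]])
    finally show False using nS by simp
  qed
  have dL: "d (Inl x) (Inr x) < L" for x
    using L Sx[of x] unfolding propagation_less_def entry_def by (meson not_le)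
  from assms(4) have m: "is_metric d" and l: "\<And>x y. d (Inl x) (Inl y) = dX x y"
    and r: "\<And>x y. d (Inr x) (Inr y) = dX x y" unfolding DXX_def by blast+
  have tri: "\<And>x y z. d x z \<le> d x y + d y z" and sym: "\<And>x y. d x y = d y x"
    using m unfolding is_metric_def by blast+
  show ?thesis
  proof (intro exI[of _ "\<bar>L\<bar> + 1"] conjI allI)
    fix x1 x2
    have a: "d (Inl x1) (Inr x2) \<le> d (Inl x1) (Inr x1) + d (Inr x1) (Inr x2)" by (rule tri)
    have b: "d (Inl x1) (Inl x2) \<le> d (Inl x1) (Inr x2) + d (Inr x2) (Inl x2)" by (rule tri)
    show "\<bar>d (Inl x1) (Inr x2) - d0 dX (Inl x1) (Inr x2)\<bar> \<le> \<bar>L\<bar> + 1"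
    proof -
      have z: "d (Inl x1) (Inl x1) = 0" using m unfolding is_metric_def by blast
      have p: "0 \<le> d (Inl x1) (Inr x1)"
        using tri[of "Inl x1" "Inl x1" "Inr x1"] sym[of "Inr x1" "Inl x1"] z by linarith
      have e: "d0 dX (Inl x1) (Inr x2) = dX x1 x2 + 1" by simp
      have s2: "d (Inr x2) (Inl x2) = d (Inl x2) (Inr x2)" by (rule sym)
      show ?thesis unfolding e abs_le_iff
        using a b dL[of x1] dL[of x2] s2 l[of x1 x2] r[of x1 x2] p by linarith
    qed
  qed simp
qed

end
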